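(* Set $\mathrm{Single}(0,A)=\mathrm{Total}(0,A)=0$. Then for every $n\ge 1$: $\mathrm{Single}(n,A)$ equals the smallest $x\in A$ with $\mathrm{gap}(x)>\mathrm{Total}(n-1,A)$, or $\infty$ if there is no such $x$ (in which case also $\mathrm{Total}(n,A)=\infty$); and $\mathrm{Total}(n,A)=\mathrm{Single}(n,A)+\mathrm{Total}(n-1,A)=\sum_{i=1}^{n}\mathrm{Single}(i,A)$.
   Context: Let $A$ be a set of positive integers with $1\in A$ (the allowed tile values). For $x\in A$, let $\mathrm{gap}(x)=x'-x$ where $x'$ is the smallest element of $A$ greater than $x$, with $\mathrm{gap}(x)=\infty$ if $x=\max A$. For an integer $n\ge 0$, the abstract generalized 2048 game $\mathrm{AGG}(n,A)$ is played on $n$ indistinguishable cells. A position assigns to each cell either nothing (the cell is empty) or a tile carrying a value in $A$. The initial position has all cells empty. A step, which can be performed from any position having at least one empty cell, consists of: (i) placing a new tile of value $1$ into a chosen empty cell; then (ii) optionally choosing any collection of pairwise disjoint sets of nonempty cells such that the sum of the tile values in each chosen set belongs to $A$, and merging each chosen set into a single tile, whose value is that sum, placed in one cell of the set, the other cells of the set becoming empty. The game ends when, after a step, all cells are nonempty (no further step is then possible). A position is reachable if it can be obtained from the initial position by a finite sequence of steps; its total value is the sum of its tile values. For $n\ge1$, $\mathrm{Single}(n,A)$ is the supremum (possibly $\infty$) of the values $x\in A$ such that the position of $\mathrm{AGG}(n,A)$ with one tile of value $x$ and $n-1$ empty cells is reachable, and $\mathrm{Total}(n,A)$ is the supremum (possibly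 $\infty$) of the total values of reachable positions of $\mathrm{AGG}(n,A)$. *)

theory Defs
  imports Main "HOL-Library.Multiset" "HOL-Library.Extended_Nat"
begin

text \<open>A position of AGG(n,A) is the multiset of the values of the tiles on the
  (indistinguishable) cells; the number of empty cells is n minus its size.\<close>

definition agg_step :: "nat \<Rightarrow> nat set \<Rightarrow> nat multiset \<Rightarrow> nat multiset \<Rightarrow> bool" where
  "agg_step n A M M' \<longleftrightarrow> size M < n \<and>
     (\<exists>R G. M + {#1#} = R + \<Sum>\<^sub># G \<and>
            (\<forall>g \<in># G. g \<noteq> {#} \<and> sum_mset g \<in> A) \<and>
            M' = R + image_mset sum_mset G)"

inductive agg_reachable :: "nat \<Rightarrow> nat set \<Rightarrow> nat multiset \<Rightarrow> bool" for n A where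
  init: "agg_reachable n A {#}"
| step: "agg_reachable n A M \<Longrightarrow> agg_step n A M M' \<Longrightarrow> agg_reachable n A M'"

definition gap :: "nat set \<Rightarrow> nat \<Rightarrow> enat" where
  "gap A x = (if \<exists>y\<in>A. y > x then enat ((LEAST y. y \<in> A \<and> y > x) - x) else \<infinity>)"

text \<open>For n = 0 the set below is empty and the supremum is 0, matching the convention.\<close>
definition Single :: "nat \<Rightarrow> nat set \<Rightarrow> enat" where
  "Single n A = Sup {enat x | x. x \<in> A \<and> agg_reachable n A {#x#}}"

definition Total :: "nat \<Rightarrow> nat set \<Rightarrow> enat" where
  "Total n A = Sup {enat (sum_mset M) | M. agg_reachable n A M}"

end

theory Submission
  imports Defs
begin


definition mg :: "nat set \<Rightarrow> nat multiset \<Rightarrow> nat multiset \<Rightarrow> bool" where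
"mg A X Y \<longleftrightarrow> (\<exists>P. X = \<Sum>\<^sub># P \<and> (\<forall>p\<in>#P. p \<noteq> {#} \<and> sum_mset p \<in> A) \<and> Y = image_mset sum_mset P)"

lemma split_img:
  "image_mset f P = \<Sum>\<^sub># Q \<Longrightarrow> \<exists>W. P = \<Sum>\<^sub># W \<and> Q = image_mset (image_mset f) W"
proof (induction Q arbitrary: P)
  case empty
  then show ?case by (intro exI[of _ "{#}"]) simp
next
  case (add q Q)
  then have "image_mset f P = q + \<Sum>\<^sub># Q" by simp
  from image_mset_eq_plusD[OF this] obtain P1 P2 where
    "P = P1 + P2" "q = image_mset f P1" "\<Sum>\<^sub># Q = image_mset f P2" by blast
  with add.IH[of P2] obtain W where "P2 = \<Sum>\<^sub># W" "Q = image_mset (image_mset f) W" by metis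
  then show ?case using \<open>P = P1 + P2\<close> \<open>q = _\<close>
    by (intro exI[of _ "add_mset P1 W"]) simp
qed

lemma sum_sum_img: "sum_mset (image_mset sum_mset W) = sum_mset (sum_mset (W :: 'a::comm_monoid_add multiset multiset))"
  by (induction W) auto

lemma mg_trans: "mg A X Y \<Longrightarrow> mg A Y Z \<Longrightarrow> mg A X Z"
proof -
  assume "mg A X Y" "mg A Y Z"
  then obtain P Q where P: "X = \<Sum>\<^sub># P" "\<forall>p\<in>#P. p \<noteq> {#} \<and> sum_mset p \<in> A" "Y = image_mset sum_mset P"
    and Q: "Y = \<Sum>\<^sub># Q" "\<forall>p\<in>#Q. p \<noteq> {#} \<and> sum_mset p \<in> A" "Z = image_mset sum_mset Q"
    unfolding mg_def by blast
  from split_img[of sum_mset P Q] P(3) Q(1) obtain W where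
    W: "P = \<Sum>\<^sub># W" "Q = image_mset (image_mset sum_mset) W" by auto
  let ?P' = "image_mset sum_mset W"
  have 1: "X = \<Sum>\<^sub># ?P'" using P(1) W(1) by (simp add: sum_sum_img)
  have 2: "Z = image_mset sum_mset ?P'" using Q(3) W(2)
    by (simp add: multiset.map_comp comp_def sum_sum_img)
  have 3: "\<forall>p\<in>#?P'. p \<noteq> {#} \<and> sum_mset p \<in> A"
  proof
    fix p assume "p \<in># ?P'"
    then obtain w where w: "w \<in># W" "p = \<Sum>\<^sub># w" by auto
    then have q: "image_mset sum_mset w \<in># Q" using W(2) by auto
    with Q(2) have "image_mset sum_mset w \<noteq> {#}" "sum_mset (image_mset sum_mset w) \<in> A" by auto
    moreover have "\<forall>x\<in>#w. x \<noteq> {#}" using w(1) W(1) P(2) by auto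
    ultimately show "p \<noteq> {#} \<and> sum_mset p \<in> A" using w(2)
      by (auto simp: sum_sum_img)
  qed
  show ?thesis unfolding mg_def using 1 2 3 by blast
qed

lemma size_Union_ge: "\<forall>g\<in>#G. g \<noteq> {#} \<Longrightarrow> size G \<le> size (\<Sum>\<^sub># G)"
proof (induction G)
  case (add g G)
  then have "size g \<ge> 1" by (simp add: Suc_le_eq nonempty_has_size)
  with add show ?case by simp
qed simp

lemma step_tiles:
  assumes "agg_step n A M M'" "set_mset M \<subseteq> A" "1 \<in> A"
  shows "set_mset M' \<subseteq> A" "size M' \<le> size M + 1" "size M < n"
proof -
  from assms(1) obtain R G where RG: "size M < n" "M + {#1#} = R + \<Sum>\<^sub># G"
    "\<forall>g \<in># G. g \<noteq> {#} \<and> sum_mset g \<in> A" "M' = R + image_mset sum_mset G"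
    unfolding agg_step_def by blast
  have "set_mset R \<subseteq> set_mset (M + {#1#})" using RG(2) by (metis set_mset_union sup_ge1)
  with assms(2,3) have "set_mset R \<subseteq> A" by auto
  with RG(3,4) show "set_mset M' \<subseteq> A" by auto
  have "size G \<le> size (\<Sum>\<^sub># G)" using RG(3) size_Union_ge by blast
  then have "size M' \<le> size (M + {#1#})" using RG(2,4) by (metis add_left_mono size_image_mset size_union)
  then show "size M' \<le> size M + 1" by simp
  show "size M < n" by fact
qed

lemma reach_tiles:
  assumes "agg_reachable n A M" "1 \<in> A"
  shows "set_mset M \<subseteq> A \<and> size M \<le> n"
  using assms(1)
proof induction
  case init then show ?case by simp
next
  case (step M M')
  with step_tiles[OF step(2) _ assms(2)] show ?case by fastforce
qed

lemma step_iff: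
  assumes "set_mset M \<subseteq> A" "1 \<in> A"
  shows "agg_step n A M M' \<longleftrightarrow> size M < n \<and> mg A (M + {#1#}) M'"
proof
  assume "agg_step n A M M'"
  then obtain R G where RG: "size M < n" "M + {#1#} = R + \<Sum>\<^sub># G"
    "\<forall>g \<in># G. g \<noteq> {#} \<and> sum_mset g \<in> A" "M' = R + image_mset sum_mset G"
    unfolding agg_step_def by blast
  have "set_mset R \<subseteq> set_mset (M + {#1#})" using RG(2) by (metis set_mset_union sup_ge1)
  with assms have RA: "set_mset R \<subseteq> A" by auto
  let ?P = "G + image_mset (\<lambda>x. {#x#}) R"
  have "M + {#1#} = \<Sum>\<^sub># ?P" using RG(2) by (simp add: add.commute)
  moreover have "M' = image_mset sum_mset ?P" using RG(4)
    by (simp add: multiset.map_comp comp_def add.commute)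
  moreover have "\<forall>p\<in>#?P. p \<noteq> {#} \<and> sum_mset p \<in> A" using RG(3) RA by auto
  ultimately show "size M < n \<and> mg A (M + {#1#}) M'" using RG(1) unfolding mg_def by blast
next
  assume "size M < n \<and> mg A (M + {#1#}) M'"
  then show "agg_step n A M M'" unfolding agg_step_def mg_def
    by (metis add_0)
qed

lemma MC:
  assumes "agg_reachable k A M" "mg A M M''" "1 \<in> A"
  shows "agg_reachable k A M''"
  using assms(1)
proof cases
  case init
  have "mg A {#} M''" using assms(2) init by simp
  then obtain P where "{#} = \<Sum>\<^sub># P" "\<forall>p\<in>#P. p \<noteq> {#} \<and> sum_mset p \<in> A" "M'' = image_mset sum_mset P"
    unfolding mg_def by blast
  then have "P = {#}" by (metis Union_mset_empty_conv multiset_nonemptyE)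
  then show ?thesis using \<open>M'' = _\<close> by (simp add: agg_reachable.init)
next
  case (step M0)
  have A0: "set_mset M0 \<subseteq> A" using reach_tiles[OF step(1) assms(3)] by blast
  have "size M0 < k \<and> mg A (M0 + {#1#}) M" using step_iff[OF A0 assms(3)] step(2) by simp
  then have "size M0 < k" "mg A (M0 + {#1#}) M" by auto
  then have "mg A (M0 + {#1#}) M''" using mg_trans[OF _ assms(2)] by blast
  with \<open>size M0 < k\<close> have "agg_step k A M0 M''" using step_iff[OF A0 assms(3)] by simp
  with step(1) show ?thesis by (rule agg_reachable.step)
qed


lemma SC:
  assumes "agg_reachable k A M" "1 \<in> A"
  shows "N \<subseteq># M \<Longrightarrow> agg_reachable k A N"
  using assms(1)
proof (induction arbitrary: N)
  case init then show ?case by (simp add: agg_reachable.init)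
next
  case (step M M')
  have A0: "set_mset M \<subseteq> A" using reach_tiles[OF step(1) assms(2)] by blast
  have "size M < k \<and> mg A (M + {#1#}) M'" using step_iff[OF A0 assms(2)] step(2) by simp
  then have sz: "size M < k" and "mg A (M + {#1#}) M'" by auto
  then obtain P where P: "M + {#1#} = \<Sum>\<^sub># P" "\<forall>p\<in>#P. p \<noteq> {#} \<and> sum_mset p \<in> A" "M' = image_mset sum_mset P"
    unfolding mg_def by blast
  from step(4) obtain X where "M' = N + X" using mset_subset_eq_exists_conv by blast
  with P(3) obtain PN PX where PNX: "P = PN + PX" "N = image_mset sum_mset PN" "X = image_mset sum_mset PX"
    using image_mset_eq_plusD[of sum_mset P N X] by auto
  have MPN: "M + {#1#} = \<Sum>\<^sub># PN + \<Sum>\<^sub># PX" using P(1) PNX(1) by simp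
  have PNok: "\<forall>p\<in>#PN. p \<noteq> {#} \<and> sum_mset p \<in> A" using P(2) PNX(1) by auto
  show ?case
  proof (cases "1 \<in># \<Sum>\<^sub># PN")
    case True
    define Q where "Q = \<Sum>\<^sub># PN - {#1#}"
    have Q1: "\<Sum>\<^sub># PN = Q + {#1#}" using True Q_def by simp
    then have "M + {#1#} = (Q + \<Sum>\<^sub># PX) + {#1#}" using MPN by (simp add: ac_simps)
    then have "M = Q + \<Sum>\<^sub># PX" by simp
    then have QM: "Q \<subseteq># M" by simp
    then have rQ: "agg_reachable k A Q" using step.IH by blast
    have "set_mset Q \<subseteq> A" using QM A0 by (meson set_mset_mono subset_trans)
    moreover have "size Q < k" using QM sz by (meson le_less_trans size_mset_mono)
    moreover have "mg A (Q + {#1#}) N" unfolding mg_def using Q1 PNok PNX(2) by metis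
    ultimately have "agg_step k A Q N" using step_iff[of Q A] assms(2) by blast
    with rQ show ?thesis by (rule agg_reachable.step)
  next
    case False
    have "1 \<in># \<Sum>\<^sub># PN + \<Sum>\<^sub># PX" using MPN[symmetric] by simp
    then have one: "1 \<in># \<Sum>\<^sub># PX" using False by simp
    define Y where "Y = \<Sum>\<^sub># PX - {#1#}"
    have "\<Sum>\<^sub># PX = Y + {#1#}" using one Y_def by simp
    then have "M + {#1#} = (\<Sum>\<^sub># PN + Y) + {#1#}" using MPN by (simp add: ac_simps)
    then have "M = \<Sum>\<^sub># PN + Y" by simp
    then have "agg_reachable k A (\<Sum>\<^sub># PN)" using step.IH by simp
    moreover have "mg A (\<Sum>\<^sub># PN) N" unfolding mg_def using PNok PNX(2) by blast
    ultimately show ?thesis using MC[OF _ _ assms(2)] by blast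
  qed
qed



lemma mg_refl: "set_mset X \<subseteq> A \<Longrightarrow> mg A X X"
  unfolding mg_def
  by (intro exI[of _ "image_mset (\<lambda>x. {#x#}) X"]) (auto simp: multiset.map_comp comp_def)

lemma step_one:
  assumes "agg_reachable k A N" "size N < k" "1 \<in> A"
  shows "agg_reachable k A (N + {#1#})"
proof -
  have A0: "set_mset N \<subseteq> A" using reach_tiles[OF assms(1,3)] by blast
  then have "mg A (N + {#1#}) (N + {#1#})" using assms(3) by (intro mg_refl) auto
  then have "agg_step k A N (N + {#1#})" using step_iff[OF A0 assms(3)] assms(2) by simp
  with assms(1) show ?thesis by (rule agg_reachable.step)
qed

lemma sum_sub_le: "(h::nat multiset) \<subseteq># K \<Longrightarrow> sum_mset h \<le> sum_mset K"
  by (metis le_add1 mset_subset_eq_exists_conv sum_mset.union)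

lemma UB:
  assumes A01: "0 \<notin> A" "1 \<in> A" and mA: "m \<in> A" and gm: "gap A m > enat t"
    and bnd: "\<forall>N. agg_reachable k A N \<longrightarrow> sum_mset N \<le> t"
  shows "agg_reachable (Suc k) A M \<Longrightarrow> M = {#} \<or> (\<exists>c N. M = add_mset c N \<and> c \<le> m \<and> agg_reachable k A N)"
proof (induction rule: agg_reachable.induct)
  case init then show ?case by simp
next
  case (step M M')
  have A0: "set_mset M \<subseteq> A" using reach_tiles[OF step(1) A01(2)] by blast
  have "size M < Suc k \<and> mg A (M + {#1#}) M'" using step_iff[OF A0 A01(2)] step(2) by simp
  then have sz: "size M < Suc k" and "mg A (M + {#1#}) M'" by auto
  then obtain P where P: "M + {#1#} = \<Sum>\<^sub># P" "\<forall>p\<in>#P. p \<noteq> {#} \<and> sum_mset p \<in> A" "M' = image_mset sum_mset P"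
    unfolding mg_def by blast
  from step.IH show ?case
  proof
    assume M0: "M = {#}"
    have "1 \<in># \<Sum>\<^sub># P" using P(1)[symmetric] by simp
    then obtain g where g: "g \<in># P" "1 \<in># g" by auto
    then obtain P' where P': "P = add_mset g P'" by (metis insert_DiffM)
    have eq: "g + \<Sum>\<^sub># P' = {#1#}" using P(1) P' M0 by simp
    have "g \<noteq> {#}" using P(2) g(1) by auto
    then have "size g \<ge> 1" by (simp add: Suc_le_eq nonempty_has_size)
    moreover have "size g + size (\<Sum>\<^sub># P') = 1" using arg_cong[OF eq, of size] by simp
    ultimately have "size (\<Sum>\<^sub># P') = 0" by linarith
    then have e1: "\<Sum>\<^sub># P' = {#}" by simp
    have g1: "g = {#1#}" using eq unfolding e1 by simp
    have "P' = {#}" using e1 P(2) P' by (cases P') auto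
    then have "M' = add_mset 1 {#}" using P(3) P' g1 by simp
    moreover have "(1::nat) \<le> m" using mA A01(1) by (cases m) auto
    ultimately show ?thesis using agg_reachable.init by blast
  next
    assume "\<exists>c N. M = add_mset c N \<and> c \<le> m \<and> agg_reachable k A N"
    then obtain c N where cN: "M = add_mset c N" "c \<le> m" "agg_reachable k A N" by blast
    have AN: "set_mset N \<subseteq> A" using A0 cN(1) by auto
    have szN: "size N < k" using sz cN(1) by simp
    have "c \<in># \<Sum>\<^sub># P" using P(1)[symmetric] cN(1) by simp
    then obtain g where g: "g \<in># P" "c \<in># g" by auto
    then obtain P' where P': "P = add_mset g P'" by (metis insert_DiffM)
    obtain h where h: "g = add_mset c h" using g(2) by (metis insert_DiffM)
    have "add_mset c (N + {#1#}) = add_mset c (h + \<Sum>\<^sub># P')" using P(1) P' h cN(1) by simp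
    then have Nh: "N + {#1#} = h + \<Sum>\<^sub># P'" by simp
    have hA: "set_mset h \<subseteq> A"
    proof -
      have "set_mset h \<subseteq> set_mset (N + {#1#})" using Nh by simp
      then show ?thesis using AN A01(2) by auto
    qed
    have P'ok: "\<forall>p\<in>#P'. p \<noteq> {#} \<and> sum_mset p \<in> A" using P(2) P' by auto
    have "mg A (N + {#1#}) (h + image_mset sum_mset P')"
      unfolding mg_def
      apply (intro exI[of _ "image_mset (\<lambda>x. {#x#}) h + P'"])
      using Nh hA P'ok by (auto simp: multiset.map_comp comp_def)
    then have "agg_step k A N (h + image_mset sum_mset P')" using step_iff[OF AN A01(2)] szN by simp
    then have "agg_reachable k A (h + image_mset sum_mset P')" using cN(3) agg_reachable.step by blast
    then have rN': "agg_reachable k A (image_mset sum_mset P')" using SC[OF _ A01(2)] by fastforce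
    have M': "M' = add_mset (sum_mset g) (image_mset sum_mset P')" using P(3) P' by simp
    have gA: "sum_mset g \<in> A" using P(2) g(1) by auto
    have "sum_mset g \<le> m"
    proof (rule ccontr)
      assume "\<not> sum_mset g \<le> m"
      then have gt: "sum_mset g > m" by simp
      then have ex: "\<exists>y\<in>A. y > m" using gA by blast
      let ?m' = "LEAST y. y \<in> A \<and> y > m"
      have "?m' \<le> sum_mset g" using gA gt by (intro Least_le) auto
      moreover have "?m' > m" using ex by (metis (mono_tags, lifting) LeastI)
      moreover have "enat (?m' - m) > enat t" using gm ex unfolding gap_def by simp
      ultimately have "sum_mset g > m + t" by simp
      then have "sum_mset h > t" using h cN(2) by simp
      moreover have "sum_mset h \<le> sum_mset N + 1"
        using sum_sub_le[of h "N + {#1#}"] Nh by simp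
      moreover have "sum_mset N \<le> t" using bnd cN(3) by blast
      moreover have "sum_mset (N + {#1#}) \<le> t" using bnd step_one[OF cN(3) szN A01(2)] by blast
      ultimately show False by simp
    qed
    then show ?thesis using M' rN' by blast
  qed
qed


lemma EMB:
  assumes "agg_reachable k A N" "agg_reachable (Suc k) A {#x#}"
  shows "agg_reachable (Suc k) A (add_mset x N)"
  using assms(1)
proof induction
  case init then show ?case using assms(2) by simp
next
  case (step N N')
  from step(2) obtain R G where RG: "size N < k" "N + {#1#} = R + \<Sum>\<^sub># G"
    "\<forall>g \<in># G. g \<noteq> {#} \<and> sum_mset g \<in> A" "N' = R + image_mset sum_mset G"
    unfolding agg_step_def by blast
  have "agg_step (Suc k) A (add_mset x N) (add_mset x N')"
    unfolding agg_step_def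
    apply (intro conjI exI[of _ "add_mset x R"] exI[of _ G])
    using RG by auto
  with step(3) show ?case by (rule agg_reachable.step)
qed

lemma step_sum: "agg_step k A M M' \<Longrightarrow> sum_mset M' = sum_mset M + 1"
proof -
  assume "agg_step k A M M'"
  then obtain R G where a: "M + {#1#} = R + \<Sum>\<^sub># G" "M' = R + image_mset sum_mset G"
    unfolding agg_step_def by blast
  have "sum_mset (M + {#1#}) = sum_mset R + sum_mset (\<Sum>\<^sub># G)" using a(1) by simp
  then show ?thesis using a(2) by (simp add: sum_sum_img)
qed

lemma DW:
  assumes "agg_reachable k A N"
  shows "d \<le> sum_mset N \<Longrightarrow> \<exists>N'. agg_reachable k A N' \<and> sum_mset N' = d"
  using assms
proof (induction arbitrary: d)
  case init then show ?case using agg_reachable.init by fastforce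
next
  case (step M M')
  show ?case
  proof (cases "d = sum_mset M'")
    case True then show ?thesis using agg_reachable.step[OF step(1,2)] by blast
  next
    case False
    then have "d \<le> sum_mset M" using step(4) step_sum[OF step(2)] by simp
    then show ?thesis using step.IH by blast
  qed
qed

lemma PRE:
  assumes "agg_reachable k A N" "sum_mset N = Suc d"
  shows "\<exists>N0. agg_reachable k A N0 \<and> size N0 < k \<and> sum_mset N0 = d"
  using assms(1)
proof cases
  case init then show ?thesis using assms(2) by simp
next
  case (step M)
  then show ?thesis using step_sum[OF step(2)] assms(2) unfolding agg_step_def by auto
qed

lemma Total_ex:
  assumes "enat d \<le> Total k A"
  shows "\<exists>N. agg_reachable k A N \<and> sum_mset N = d"
proof (cases d)
  case 0 then show ?thesis using agg_reachable.init by fastforce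
next
  case (Suc d')
  then have "enat d' < Total k A" using assms Suc_ile_eq by simp
  then obtain s where "s \<in> {enat (sum_mset M) | M. agg_reachable k A M}" "enat d' < s"
    unfolding Total_def using less_Sup_iff by blast
  then obtain M where "agg_reachable k A M" "d' < sum_mset M" by auto
  then show ?thesis using DW Suc by (metis Suc_leI)
qed

lemma CL:
  assumes "agg_reachable (Suc k) A {#x#}" "y \<in> A" "x < y" "enat (y - x) \<le> Total k A"
  shows "agg_reachable (Suc k) A {#y#}"
proof -
  obtain N where N: "agg_reachable k A N" "sum_mset N = y - x" using Total_ex[OF assms(4)] by blast
  have "sum_mset N = Suc (y - x - 1)" using N(2) assms(3) by simp
  then obtain N0 where N0: "agg_reachable k A N0" "size N0 < k" "sum_mset N0 = y - x - 1"
    using PRE[OF N(1)] by blast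
  have r: "agg_reachable (Suc k) A (add_mset x N0)" using EMB[OF N0(1) assms(1)] .
  have s: "sum_mset (add_mset x N0 + {#1#}) = y" using N0(3) assms(3) by simp
  let ?g = "add_mset x N0 + {#1#}"
  have e1: "add_mset x N0 + {#1#} = {#} + \<Sum>\<^sub># {#?g#}" by simp
  have e2: "{#y#} = {#} + image_mset sum_mset {#?g#}" using s by simp
  have e3: "\<forall>g\<in>#{#?g#}. g \<noteq> {#} \<and> sum_mset g \<in> A" using s assms(2) by simp
  have "agg_step (Suc k) A (add_mset x N0) {#y#}"
    unfolding agg_step_def using e1 e2 e3 N0(2) by (metis Suc_mono size_add_mset)
  with r show ?thesis by (rule agg_reachable.step)
qed

lemma CLIMB:
  assumes A01: "0 \<notin> A" "1 \<in> A" and gz: "\<forall>z\<in>A. z < x \<longrightarrow> gap A z \<le> Total k A" and xA: "x \<in> A"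
  shows "agg_reachable (Suc k) A {#x#}"
  using gz xA
proof (induction x rule: less_induct)
  case (less x)
  show ?case
  proof (cases "x \<le> 1")
    case True
    then have "x = 1" using less(3) A01(1) by (cases x) auto
    have "agg_step (Suc k) A {#} {#1#}"
      unfolding agg_step_def by (intro conjI exI[of _ "{#1#}"] exI[of _ "{#}"]) auto
    then show ?thesis using \<open>x = 1\<close> agg_reachable.init agg_reachable.step by blast
  next
    case False
    define Z where "Z = {z\<in>A. z < x}"
    have fZ: "finite Z" "1 \<in> Z" using False A01(2) Z_def by auto
    define y where "y = Max Z"
    have "y \<in> Z" using Max_in[OF fZ(1)] fZ(2) y_def by auto
    then have yZ: "y \<in> A" "y < x" using Z_def by auto
    have ymax: "\<And>z. z \<in> A \<Longrightarrow> z < x \<Longrightarrow> z \<le> y" using fZ(1) y_def Z_def by auto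
    have ry: "agg_reachable (Suc k) A {#y#}"
      using less(1)[OF yZ(2)] less(2) yZ by auto
    have L: "(LEAST z. z \<in> A \<and> z > y) = x"
    proof (rule Least_equality)
      show "x \<in> A \<and> x > y" using less(3) yZ by simp
      show "\<And>z. z \<in> A \<and> z > y \<Longrightarrow> x \<le> z" using ymax by (meson not_le)
    qed
    have "gap A y = enat (x - y)" unfolding gap_def L using less(3) yZ by auto
    then have "enat (x - y) \<le> Total k A" using less(2) yZ by metis
    then show ?thesis using CL[OF ry less(3) yZ(2)] by blast
  qed
qed


lemma Total0: "1 \<in> A \<Longrightarrow> Total 0 A = 0"
proof -
  assume a: "1 \<in> A"
  have e: "agg_reachable 0 A M \<longleftrightarrow> M = {#}" for M
    using reach_tiles[OF _ a, of 0 M] agg_reachable.init[of 0 A] by auto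
  have "{enat (sum_mset M) | M. agg_reachable 0 A M} = {0}"
    unfolding e by (auto simp: zero_enat_def)
  then show ?thesis unfolding Total_def by simp
qed

lemma Single_le_Total: "Single n A \<le> Total n A"
  unfolding Single_def Total_def
  by (rule Sup_subset_mono) (auto, metis sum_mset.singleton)

lemma sum_le_size: "(\<forall>x\<in>#N. x \<le> (B::nat)) \<Longrightarrow> sum_mset N \<le> size N * B"
  by (induction N) auto

lemma Total_fin:
  assumes "finite A" "1 \<in> A"
  shows "Total k A \<le> enat (k * Max A)"
  unfolding Total_def
proof (rule Sup_least, clarify)
  fix M assume r: "agg_reachable k A M"
  then have "set_mset M \<subseteq> A" "size M \<le> k" using reach_tiles[OF r assms(2)] by auto
  then have "\<forall>x\<in>#M. x \<le> Max A" using assms(1) by auto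
  then have "sum_mset M \<le> size M * Max A" by (rule sum_le_size)
  also have "\<dots> \<le> k * Max A" using \<open>size M \<le> k\<close> by simp
  finally show "enat (sum_mset M) \<le> enat (k * Max A)" by simp
qed

lemma Single_inf:
  assumes "infinite A" "\<forall>x\<in>A. agg_reachable n A {#x#}"
  shows "Single n A = \<infinity>"
proof -
  have "{enat x | x. x \<in> A \<and> agg_reachable n A {#x#}} = enat ` A" using assms(2) by auto
  moreover have "infinite (enat ` A)" using assms(1) by (simp add: finite_image_iff inj_on_def)
  ultimately show ?thesis unfolding Single_def Sup_enat_def by auto
qed

lemma PER:
  assumes A01: "0 \<notin> A" "1 \<in> A"
  shows "Single (Suc k) A = (if \<exists>x\<in>A. gap A x > Total k A
                       then enat (LEAST x. x \<in> A \<and> gap A x > Total k A)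
                       else \<infinity>)
       \<and> ((\<not> (\<exists>x\<in>A. gap A x > Total k A)) \<longrightarrow> Total (Suc k) A = \<infinity>)
       \<and> Total (Suc k) A = Single (Suc k) A + Total k A"
proof (cases "\<exists>x\<in>A. gap A x > Total k A")
  case False
  then have gz: "\<forall>z\<in>A. z < x \<longrightarrow> gap A z \<le> Total k A" for x by (auto simp: not_less)
  have allr: "\<forall>x\<in>A. agg_reachable (Suc k) A {#x#}" using CLIMB[OF A01 gz] by blast
  have inf: "infinite A"
  proof
    assume fA: "finite A"
    then have TF: "Total k A \<le> enat (k * Max A)" using Total_fin A01 by blast
    have MA: "Max A \<in> A" using fA A01(2) by (auto intro: Max_in)
    have "\<not> (\<exists>y\<in>A. y > Max A)" using fA by (simp add: not_less)
    then have "gap A (Max A) = \<infinity>" unfolding gap_def by auto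
    moreover have "Total k A < \<infinity>" using le_less_trans[OF TF, of \<infinity>] by simp
    ultimately have "gap A (Max A) > Total k A" by simp
    with False MA show False by blast
  qed
  have S: "Single (Suc k) A = \<infinity>" using Single_inf[OF inf allr] .
  then have T: "Total (Suc k) A = \<infinity>" using Single_le_Total[of "Suc k" A] by (metis enat_ord_simps(5) top_enat_def)
  show ?thesis using False S T by simp
next
  case True
  have fin: "Total k A \<noteq> \<infinity>" using True enat_ord_simps(6) by metis
  then obtain t where t: "Total k A = enat t" by (cases "Total k A") auto
  define m where "m = (LEAST x. x \<in> A \<and> gap A x > Total k A)"
  have mA: "m \<in> A" "gap A m > enat t" using LeastI_ex[of "\<lambda>x. x \<in> A \<and> gap A x > Total k A"] True t m_def by auto
  have gz: "\<forall>z\<in>A. z < m \<longrightarrow> gap A z \<le> Total k A"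
  proof (intro ballI impI)
    fix z assume "z \<in> A" "z < m"
    have "\<not> (z \<in> A \<and> gap A z > Total k A)" using \<open>z < m\<close> unfolding m_def by (rule not_less_Least)
    then show "gap A z \<le> Total k A" using \<open>z \<in> A\<close> by (simp add: not_less)
  qed
  have rm: "agg_reachable (Suc k) A {#m#}" using CLIMB[OF A01 gz mA(1)] .
  have bnd: "\<forall>N. agg_reachable k A N \<longrightarrow> sum_mset N \<le> t"
  proof (intro allI impI)
    fix N assume "agg_reachable k A N"
    then have "enat (sum_mset N) \<le> Total k A" unfolding Total_def by (auto intro: Sup_upper)
    then show "sum_mset N \<le> t" using t by simp
  qed
  note U = UB[OF A01 mA bnd]
  have S: "Single (Suc k) A = enat m"
  proof (rule antisym)
    show "Single (Suc k) A \<le> enat m" unfolding Single_def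
    proof (rule Sup_least, clarify)
      fix x assume "agg_reachable (Suc k) A {#x#}"
      from U[OF this] obtain c N where "{#x#} = add_mset c N" "c \<le> m" by auto
      then have "c = x" by (metis multi_member_last union_single_eq_member add_mset_add_single single_eq_add_mset)
      then show "enat x \<le> enat m" using \<open>c \<le> m\<close> by simp
    qed
    show "enat m \<le> Single (Suc k) A" unfolding Single_def using rm mA(1) by (auto intro: Sup_upper)
  qed
  have T: "Total (Suc k) A = enat (m + t)"
  proof (rule antisym)
    show "Total (Suc k) A \<le> enat (m + t)" unfolding Total_def
    proof (rule Sup_least, clarify)
      fix M assume "agg_reachable (Suc k) A M"
      from U[OF this] show "enat (sum_mset M) \<le> enat (m + t)"
      proof
        assume "M = {#}" then show ?thesis by simp
      next
        assume "\<exists>c N. M = add_mset c N \<and> c \<le> m \<and> agg_reachable k A N"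
        then obtain c N where "M = add_mset c N" "c \<le> m" "agg_reachable k A N" by blast
        then have "sum_mset N \<le> t" using bnd by blast
        then show ?thesis using \<open>M = _\<close> \<open>c \<le> m\<close> by simp
      qed
    qed
    obtain N where N: "agg_reachable k A N" "sum_mset N = t" using Total_ex[of t k A] t by auto
    have "agg_reachable (Suc k) A (add_mset m N)" using EMB[OF N(1) rm] .
    then show "enat (m + t) \<le> Total (Suc k) A" unfolding Total_def using N(2)
      by (intro Sup_upper) (auto intro!: exI[of _ "add_mset m N"])
  qed
  show ?thesis using True S T t m_def by simp
qed

theorem mainTheorem7:
  fixes A :: "nat set" and n :: nat
  assumes "0 \<notin> A" and "1 \<in> A" and "n \<ge> 1"
  shows "Single n A = (if \<exists>x\<in>A. gap A x > Total (n - 1) A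
                       then enat (LEAST x. x \<in> A \<and> gap A x > Total (n - 1) A)
                       else \<infinity>)
       \<and> ((\<not> (\<exists>x\<in>A. gap A x > Total (n - 1) A)) \<longrightarrow> Total n A = \<infinity>)
       \<and> Total n A = Single n A + Total (n - 1) A
       \<and> Total n A = (\<Sum>i = 1..n. Single i A)"
proof -
  obtain k where n: "n = Suc k" using assms(3) by (cases n) auto
  have P: "Total (Suc j) A = Single (Suc j) A + Total j A" for j using PER[OF assms(1,2)] by blast
  have sumT: "Total j A = (\<Sum>i = 1..j. Single i A)" for j
  proof (induction j)
    case 0 then show ?case using Total0[OF assms(2)] by simp
  next
    case (Suc j) then show ?case using P[of j] by (simp add: add.commute)
  qed
  show ?thesis using PER[OF assms(1,2), of k] sumT[of n] n by simp
qed

end
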